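(* The libraries $AbsQ$ and $AbsQ_0$ (defined in the context) have exactly the same set of histories: $AbsQ$ refines $AbsQ_0$ and $AbsQ_0$ refines $AbsQ$, i.e. $H(AbsQ)=H(AbsQ_0)$.
   Context: Fix a set $\mathit{Vals}$ of values containing a special value $\mathtt{EMPTY}$, take operation identifiers $\mathit{Ops}=\mathbb{N}$, and methods $\mathit{Methods}=\{enq,deq\}$. Call actions are $inv(m,d,k)$ and return actions $ret(m,d,k)$ ($m$ a method, $d$ a value, $k$ an operation identifier); $C$ and $R$ denote the sets of all call, resp. return, actions (the value field is omitted when irrelevant, e.g. $inv(deq,k)$, $ret(enq,k)$). A labeled transition system (LTS) $(Q,\Sigma,s_0,\delta)$ has states $Q$, alphabet $\Sigma$, initial state $s_0$ and transition relation $\delta\subseteq Q\times\Sigma\times Q$; a trace is the sequence of labels of a finite execution from $s_0$. The history set $H(L)$ of an LTS $L$ with $C\cup R\subseteq\Sigma$ is the set of projections of its traces onto $C\cup R$. $L_1$ refines $L_2$ iff $H(L_1)\subseteq H(L_2)$. For a partial function $f$, $f[x\mapsto y]$ is $f$ updated at $x$. $AbsQ_0$ (standard atomic queue): states are tuples $(\sigma,in,rv,cp)$ with $\sigma\in\mathit{Vals}^*$ and partial functions $in,rv:\mathit{Ops}\rightharpoonup\mathit{Vals}$, $cp:\mathit{Ops}\rightharpoonup\{A_1,A,A_2,R_1,R_2,R_3\}$; initially $\sigma=\epsilon$ and all functions empty. Transitions: $inv(enq,d,k)$ if $k\notin dom(cp)$, $d\ne\mathtt{EMPTY}$: set $in(k)=d$,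 $cp(k)=A_1$. $lin(enq,d,k)$ if $cp(k)=A_1$, $in(k)=d$: $\sigma:=d\cdot\sigma$, $cp(k)=A$. $ret(enq,k)$ if $cp(k)=A$: $cp(k)=A_2$. $inv(deq,k)$ if $k\notin dom(cp)$: $cp(k)=R_1$. $lin(deq,d,k)$ if $cp(k)=R_1$ and $\sigma=\sigma'\cdot d$: $\sigma:=\sigma'$, $rv(k)=d$, $cp(k)=R_2$. $lin(deq,\mathtt{EMPTY},k)$ if $cp(k)=R_1$ and $\sigma=\epsilon$: $rv(k)=\mathtt{EMPTY}$, $cp(k)=R_2$. $ret(deq,d,k)$ if $cp(k)=R_2$ and $rv(k)=d$: $cp(k)=R_3$. $AbsQ$: alphabet $C\cup R\cup Lin(deq)$ where $Lin(deq)=\{lin(deq,d,k)\}$. States are tuples $(O,<,\ell,rv,cp)$ with $O\subseteq\mathit{Ops}$, $<$ a strict partial order on $O$, $\ell:O\to\mathit{Vals}\times\{\mathtt{PEND},\mathtt{COMP}\}$ (write $\ell_1,\ell_2$ for its components), $rv:\mathit{Ops}\rightharpoonup\mathit{Vals}$, $cp:\mathit{Ops}\rightharpoonup\{A_1,A_2,R_1,R_2,R_3\}$; all components empty initially. Let $\mathtt{COMP}(O)=\{k\in O:\ell_2(k)=\mathtt{COMP}\}$, $min(O)$ the $<$-minimal elements of $O$, and $<\uparrow k'$ the relation $<$ with all pairs containing $k'$ removed. Transitions: $inv(enq,d,k)$ if $k\notin dom(cp)$, $d\ne\mathtt{EMPTY}$: $O:=O\cup\{k\}$, $<:=<\cup(\mathtt{COMP}(O)\times\{k\})$,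 $\ell(k)=(d,\mathtt{PEND})$, $cp(k)=A_1$. $inv(deq,k)$ if $k\notin dom(cp)$: $cp(k)=R_1$. $ret(deq,d,k)$ if $cp(k)=R_2$, $rv(k)=d$: $cp(k)=R_3$. $ret(enq,k)$ if $cp(k)=A_1$, $k\in O$, $\ell(k)=(d,\mathtt{PEND})$: $\ell(k)=(d,\mathtt{COMP})$, $cp(k)=A_2$. $ret(enq,k)$ if $cp(k)=A_1$, $k\notin O$: $cp(k)=A_2$. $lin(deq,d,k)$ if $cp(k)=R_1$, $d\ne\mathtt{EMPTY}$, and some $k'\in min(O)$ has $\ell_1(k')=d$: $O:=O\setminus\{k'\}$, $<:=<\uparrow k'$, $rv(k)=d$, $cp(k)=R_2$. $lin(deq,\mathtt{EMPTY},k)$ if $cp(k)=R_1$ and $\ell_2(o)=\mathtt{PEND}$ for all $o\in O$: $rv(k)=\mathtt{EMPTY}$, $cp(k)=R_2$. *)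

theory Defs
  imports Main
begin

record ('s, 'a) lts =
  init :: 's
  step :: "'s \<Rightarrow> 'a \<Rightarrow> 's \<Rightarrow> bool"

inductive execs :: "('s, 'a) lts \<Rightarrow> 'a list \<Rightarrow> 's \<Rightarrow> bool" for L where
  execs_nil: "execs L [] (init L)"
| execs_snoc: "execs L tr s \<Longrightarrow> step L s a s' \<Longrightarrow> execs L (tr @ [a]) s'"

definition traces :: "('s, 'a) lts \<Rightarrow> 'a list set" where
  "traces L = {tr. \<exists>s. execs L tr s}"

datatype 'v act =
    InvEnq 'v nat
  | RetEnq nat
  | InvDeq nat
  | RetDeq 'v nat
  | LinEnq 'v nat
  | LinDeq 'v nat

fun is_call_ret :: "'v act \<Rightarrow> bool" where
  "is_call_ret (InvEnq d k) = True"
| "is_call_ret (RetEnq k) = True"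
| "is_call_ret (InvDeq k) = True"
| "is_call_ret (RetDeq d k) = True"
| "is_call_ret (LinEnq d k) = False"
| "is_call_ret (LinDeq d k) = False"

definition hist :: "('s, 'v act) lts \<Rightarrow> 'v act list set" where
  "hist L = filter is_call_ret ` traces L"

definition refines :: "('s, 'v act) lts \<Rightarrow> ('t, 'v act) lts \<Rightarrow> bool" where
  "refines L1 L2 \<longleftrightarrow> hist L1 \<subseteq> hist L2"

datatype cpl = A1 | A | A2 | R1 | R2 | R3

(* state: (sigma, in, rv, cp); sigma = d \<cdot> sigma' is  d # sigma' *)
type_synonym 'v q0state = "'v list \<times> (nat \<rightharpoonup> 'v) \<times> (nat \<rightharpoonup> 'v) \<times> (nat \<rightharpoonup> cpl)"

inductive q0step :: "'v \<Rightarrow> 'v q0state \<Rightarrow> 'v act \<Rightarrow> 'v q0state \<Rightarrow> bool" for EMPTY where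
  "k \<notin> dom cp \<Longrightarrow> d \<noteq> EMPTY \<Longrightarrow>
     q0step EMPTY (\<sigma>, inn, rv, cp) (InvEnq d k) (\<sigma>, inn(k \<mapsto> d), rv, cp(k \<mapsto> A1))"
| "cp k = Some A1 \<Longrightarrow> inn k = Some d \<Longrightarrow>
     q0step EMPTY (\<sigma>, inn, rv, cp) (LinEnq d k) (d # \<sigma>, inn, rv, cp(k \<mapsto> A))"
| "cp k = Some A \<Longrightarrow>
     q0step EMPTY (\<sigma>, inn, rv, cp) (RetEnq k) (\<sigma>, inn, rv, cp(k \<mapsto> A2))"
| "k \<notin> dom cp \<Longrightarrow>
     q0step EMPTY (\<sigma>, inn, rv, cp) (InvDeq k) (\<sigma>, inn, rv, cp(k \<mapsto> R1))"
| "cp k = Some R1 \<Longrightarrow>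
     q0step EMPTY (\<sigma>' @ [d], inn, rv, cp) (LinDeq d k) (\<sigma>', inn, rv(k \<mapsto> d), cp(k \<mapsto> R2))"
| "cp k = Some R1 \<Longrightarrow>
     q0step EMPTY ([], inn, rv, cp) (LinDeq EMPTY k) ([], inn, rv(k \<mapsto> EMPTY), cp(k \<mapsto> R2))"
| "cp k = Some R2 \<Longrightarrow> rv k = Some d \<Longrightarrow>
     q0step EMPTY (\<sigma>, inn, rv, cp) (RetDeq d k) (\<sigma>, inn, rv, cp(k \<mapsto> R3))"

definition AbsQ0 :: "'v \<Rightarrow> ('v q0state, 'v act) lts" where
  "AbsQ0 EMPTY = \<lparr> init = ([], Map.empty, Map.empty, Map.empty), step = q0step EMPTY \<rparr>"

datatype status = PEND | COMP

(* state: (O, <, l, rv, cp); < is a relation on O given as a set of pairs (a,b) meaning a < b;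
   l is a partial map whose domain is O *)
type_synonym 'v qstate =
  "nat set \<times> (nat \<times> nat) set \<times> (nat \<rightharpoonup> 'v \<times> status) \<times> (nat \<rightharpoonup> 'v) \<times> (nat \<rightharpoonup> cpl)"

definition COMPs :: "nat set \<Rightarrow> (nat \<rightharpoonup> 'v \<times> status) \<Rightarrow> nat set" where
  "COMPs Os l = {k \<in> Os. \<exists>d. l k = Some (d, COMP)}"

definition minset :: "nat set \<Rightarrow> (nat \<times> nat) set \<Rightarrow> nat set" where
  "minset Os R = {k \<in> Os. \<forall>j \<in> Os. (j, k) \<notin> R}"

definition remove_from :: "(nat \<times> nat) set \<Rightarrow> nat \<Rightarrow> (nat \<times> nat) set" where
  "remove_from R k' = {(a, b) \<in> R. a \<noteq> k' \<and> b \<noteq> k'}"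

inductive qstep :: "'v \<Rightarrow> 'v qstate \<Rightarrow> 'v act \<Rightarrow> 'v qstate \<Rightarrow> bool" for EMPTY where
  "k \<notin> dom cp \<Longrightarrow> d \<noteq> EMPTY \<Longrightarrow>
     qstep EMPTY (Os, R, l, rv, cp) (InvEnq d k)
       (Os \<union> {k}, R \<union> (COMPs Os l \<times> {k}), l(k \<mapsto> (d, PEND)), rv, cp(k \<mapsto> A1))"
| "k \<notin> dom cp \<Longrightarrow>
     qstep EMPTY (Os, R, l, rv, cp) (InvDeq k) (Os, R, l, rv, cp(k \<mapsto> R1))"
| "cp k = Some R2 \<Longrightarrow> rv k = Some d \<Longrightarrow>
     qstep EMPTY (Os, R, l, rv, cp) (RetDeq d k) (Os, R, l, rv, cp(k \<mapsto> R3))"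
| "cp k = Some A1 \<Longrightarrow> k \<in> Os \<Longrightarrow> l k = Some (d, PEND) \<Longrightarrow>
     qstep EMPTY (Os, R, l, rv, cp) (RetEnq k) (Os, R, l(k \<mapsto> (d, COMP)), rv, cp(k \<mapsto> A2))"
| "cp k = Some A1 \<Longrightarrow> k \<notin> Os \<Longrightarrow>
     qstep EMPTY (Os, R, l, rv, cp) (RetEnq k) (Os, R, l, rv, cp(k \<mapsto> A2))"
| "cp k = Some R1 \<Longrightarrow> d \<noteq> EMPTY \<Longrightarrow> k' \<in> minset Os R \<Longrightarrow> l k' = Some (d, st) \<Longrightarrow>
     qstep EMPTY (Os, R, l, rv, cp) (LinDeq d k)
       (Os - {k'}, remove_from R k', l(k' := None), rv(k \<mapsto> d), cp(k \<mapsto> R2))"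
| "cp k = Some R1 \<Longrightarrow> (\<forall>o' \<in> Os. \<exists>d. l o' = Some (d, PEND)) \<Longrightarrow>
     qstep EMPTY (Os, R, l, rv, cp) (LinDeq EMPTY k) (Os, R, l, rv(k \<mapsto> EMPTY), cp(k \<mapsto> R2))"

definition AbsQ :: "'v \<Rightarrow> ('v qstate, 'v act) lts" where
  "AbsQ EMPTY = \<lparr> init = ({}, {}, Map.empty, Map.empty, Map.empty), step = qstep EMPTY \<rparr>"

end

theory Submission
  imports Defs
begin


definition Fc where
"Fc E (\<sigma>::'v list) inn rv0 cp0 Os R l rv cp ids \<longleftrightarrow>
   distinct ids \<and> \<sigma> = map (\<lambda>k. the (inn k)) ids \<and>
   (\<forall>k\<in>set ids. cp0 k = Some A \<or> cp0 k = Some A2) \<and>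
   (\<forall>k. (cp0 k = Some A1 \<or> cp0 k = Some A \<or> cp0 k = Some A2) \<longleftrightarrow> k \<in> dom inn) \<and>
   (\<forall>k d. inn k = Some d \<longrightarrow> d \<noteq> E) \<and>
   Os = {k. cp0 k = Some A1} \<union> set ids \<and>
   l = (\<lambda>k. if k \<in> Os then Some (the (inn k), if cp0 k = Some A2 then COMP else PEND) else None) \<and>
   rv = rv0 \<and> cp = (\<lambda>k. if cp0 k = Some A then Some A1 else cp0 k) \<and>
   (\<forall>a b. (a,b) \<in> R \<longrightarrow> a \<in> set ids \<and> b \<in> Os \<and> a \<noteq> b) \<and>
   sorted_wrt (\<lambda>x y. (x,y) \<notin> R) ids"

definition Fsim :: "'v \<Rightarrow> 'v q0state \<Rightarrow> 'v qstate \<Rightarrow> bool" where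
"Fsim E t s \<longleftrightarrow> (\<exists>\<sigma> inn rv0 cp0 Os R l rv cp ids. t = (\<sigma>,inn,rv0,cp0) \<and> s = (Os,R,l,rv,cp) \<and>
   Fc E \<sigma> inn rv0 cp0 Os R l rv cp ids)"

lemma FsimI: "Fc E \<sigma> inn rv0 cp0 Os R l rv cp ids \<Longrightarrow> Fsim E (\<sigma>,inn,rv0,cp0) (Os,R,l,rv,cp)"
  unfolding Fsim_def by blast

lemma FsimE: "Fsim E (\<sigma>,inn,rv0,cp0) s \<Longrightarrow> (\<And>Os R l rv cp ids. s = (Os,R,l,rv,cp) \<Longrightarrow> Fc E \<sigma> inn rv0 cp0 Os R l rv cp ids \<Longrightarrow> P) \<Longrightarrow> P"
  unfolding Fsim_def by blast

lemma fwd_InvEnq: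
  assumes F: "Fc E \<sigma> inn rv0 cp0 Os R l rv cp ids" and k: "k \<notin> dom cp0" and d: "d \<noteq> E"
  shows "Fc E \<sigma> (inn(k\<mapsto>d)) rv0 (cp0(k\<mapsto>A1)) (Os \<union> {k}) (R \<union> (COMPs Os l \<times> {k})) (l(k \<mapsto> (d, PEND))) rv (cp(k \<mapsto> A1)) ids
     \<and> qstep E (Os,R,l,rv,cp) (InvEnq d k) (Os \<union> {k}, R \<union> (COMPs Os l \<times> {k}), l(k \<mapsto> (d, PEND)), rv, cp(k \<mapsto> A1))"
proof -
  note H = F[unfolded Fc_def]
  have kids: "k \<notin> set ids" using H k by auto
  have kcp: "k \<notin> dom cp" using H k by auto
  have st: "qstep E (Os,R,l,rv,cp) (InvEnq d k) (Os \<union> {k}, R \<union> (COMPs Os l \<times> {k}), l(k \<mapsto> (d, PEND)), rv, cp(k \<mapsto> A1))"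
    by (rule qstep.intros(1)[OF kcp d])
  have CO: "COMPs Os l \<subseteq> set ids" using H by (auto simp: COMPs_def split: if_splits)
  have "Fc E \<sigma> (inn(k\<mapsto>d)) rv0 (cp0(k\<mapsto>A1)) (Os \<union> {k}) (R \<union> (COMPs Os l \<times> {k})) (l(k \<mapsto> (d, PEND))) rv (cp(k \<mapsto> A1)) ids"
    unfolding Fc_def
  proof (intro conjI)
    show "\<sigma> = map (\<lambda>j. the ((inn(k\<mapsto>d)) j)) ids" using H kids by auto
    show "\<forall>j\<in>set ids. (cp0(k\<mapsto>A1)) j = Some A \<or> (cp0(k\<mapsto>A1)) j = Some A2" using H kids by auto
    show "\<forall>j. ((cp0(k\<mapsto>A1)) j = Some A1 \<or> (cp0(k\<mapsto>A1)) j = Some A \<or> (cp0(k\<mapsto>A1)) j = Some A2) \<longleftrightarrow> j \<in> dom (inn(k\<mapsto>d))"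
      using H by auto
    show "\<forall>j e. (inn(k\<mapsto>d)) j = Some e \<longrightarrow> e \<noteq> E" using H d by auto
    show "Os \<union> {k} = {j. (cp0(k\<mapsto>A1)) j = Some A1} \<union> set ids" using H kids k by auto
    show "l(k \<mapsto> (d, PEND)) = (\<lambda>j. if j \<in> Os \<union> {k} then Some (the ((inn(k\<mapsto>d)) j), if (cp0(k\<mapsto>A1)) j = Some A2 then COMP else PEND) else None)"
      using H by (auto simp: fun_eq_iff)
    show "cp(k \<mapsto> A1) = (\<lambda>j. if (cp0(k\<mapsto>A1)) j = Some A then Some A1 else (cp0(k\<mapsto>A1)) j)"
      using H by (auto simp: fun_eq_iff)
    show "\<forall>a b. (a,b) \<in> R \<union> (COMPs Os l \<times> {k}) \<longrightarrow> a \<in> set ids \<and> b \<in> Os \<union> {k} \<and> a \<noteq> b"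
      using H CO kids by auto
    show "sorted_wrt (\<lambda>x y. (x,y) \<notin> R \<union> (COMPs Os l \<times> {k})) ids"
      using H kids by (auto simp: sorted_wrt_iff_nth_less)
  qed (use H in auto)
  with st show ?thesis by blast
qed

lemma fwd_LinEnq:
  assumes F: "Fc E \<sigma> inn rv0 cp0 Os R l rv cp ids" and k: "cp0 k = Some A1" and d: "inn k = Some d"
  shows "Fc E (d#\<sigma>) inn rv0 (cp0(k\<mapsto>A)) Os R l rv cp (k#ids)"
proof -
  note H = F[unfolded Fc_def]
  have kids: "k \<notin> set ids" using H k by auto
  show ?thesis unfolding Fc_def
  proof (intro conjI)
    show "Os = {j. (cp0(k\<mapsto>A)) j = Some A1} \<union> set (k#ids)" using H k by auto
    show "l = (\<lambda>j. if j \<in> Os then Some (the (inn j), if (cp0(k\<mapsto>A)) j = Some A2 then COMP else PEND) else None)"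
      using H k by (auto simp: fun_eq_iff)
    show "cp = (\<lambda>j. if (cp0(k\<mapsto>A)) j = Some A then Some A1 else (cp0(k\<mapsto>A)) j)"
      using H k by (auto simp: fun_eq_iff)
    show "sorted_wrt (\<lambda>x y. (x,y) \<notin> R) (k#ids)" using H kids by auto
  qed (use H kids k d in auto)
qed

lemma fwd_RetEnq1:
  assumes F: "Fc E \<sigma> inn rv0 cp0 Os R l rv cp ids" and k: "cp0 k = Some A" and kids: "k \<in> set ids"
  shows "Fc E \<sigma> inn rv0 (cp0(k\<mapsto>A2)) Os R (l(k\<mapsto>(the (inn k),COMP))) rv (cp(k\<mapsto>A2)) ids
    \<and> qstep E (Os,R,l,rv,cp) (RetEnq k) (Os,R,l(k\<mapsto>(the (inn k),COMP)),rv,cp(k\<mapsto>A2))"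
proof -
  note H = F[unfolded Fc_def]
  have st: "qstep E (Os,R,l,rv,cp) (RetEnq k) (Os,R,l(k\<mapsto>(the (inn k),COMP)),rv,cp(k\<mapsto>A2))"
    by (rule qstep.intros(4)) (use H k kids in auto)
  have "Fc E \<sigma> inn rv0 (cp0(k\<mapsto>A2)) Os R (l(k\<mapsto>(the (inn k),COMP))) rv (cp(k\<mapsto>A2)) ids"
    unfolding Fc_def
  proof (intro conjI)
    show "Os = {j. (cp0(k\<mapsto>A2)) j = Some A1} \<union> set ids" using H k by auto
    show "l(k\<mapsto>(the (inn k),COMP)) = (\<lambda>j. if j \<in> Os then Some (the (inn j), if (cp0(k\<mapsto>A2)) j = Some A2 then COMP else PEND) else None)"
      using H k kids by (auto simp: fun_eq_iff)
    show "cp(k\<mapsto>A2) = (\<lambda>j. if (cp0(k\<mapsto>A2)) j = Some A then Some A1 else (cp0(k\<mapsto>A2)) j)"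
      using H k by (auto simp: fun_eq_iff)
  qed (use H k kids in auto)
  with st show ?thesis by blast
qed

lemma fwd_RetEnq2:
  assumes F: "Fc E \<sigma> inn rv0 cp0 Os R l rv cp ids" and k: "cp0 k = Some A" and kids: "k \<notin> set ids"
  shows "Fc E \<sigma> inn rv0 (cp0(k\<mapsto>A2)) Os R l rv (cp(k\<mapsto>A2)) ids
    \<and> qstep E (Os,R,l,rv,cp) (RetEnq k) (Os,R,l,rv,cp(k\<mapsto>A2))"
proof -
  note H = F[unfolded Fc_def]
  have st: "qstep E (Os,R,l,rv,cp) (RetEnq k) (Os,R,l,rv,cp(k\<mapsto>A2))"
    by (rule qstep.intros(5)) (use H k kids in auto)
  have "Fc E \<sigma> inn rv0 (cp0(k\<mapsto>A2)) Os R l rv (cp(k\<mapsto>A2)) ids"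
    unfolding Fc_def
  proof (intro conjI)
    show "Os = {j. (cp0(k\<mapsto>A2)) j = Some A1} \<union> set ids" using H k by auto
    show "l = (\<lambda>j. if j \<in> Os then Some (the (inn j), if (cp0(k\<mapsto>A2)) j = Some A2 then COMP else PEND) else None)"
      using H k kids by (auto simp: fun_eq_iff)
    show "cp(k\<mapsto>A2) = (\<lambda>j. if (cp0(k\<mapsto>A2)) j = Some A then Some A1 else (cp0(k\<mapsto>A2)) j)"
      using H k by (auto simp: fun_eq_iff)
  qed (use H k kids in auto)
  with st show ?thesis by blast
qed

lemma fwd_InvDeq:
  assumes F: "Fc E \<sigma> inn rv0 cp0 Os R l rv cp ids" and k: "k \<notin> dom cp0"
  shows "Fc E \<sigma> inn rv0 (cp0(k\<mapsto>R1)) Os R l rv (cp(k\<mapsto>R1)) ids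
    \<and> qstep E (Os,R,l,rv,cp) (InvDeq k) (Os,R,l,rv,cp(k\<mapsto>R1))"
proof -
  note H = F[unfolded Fc_def]
  have kids: "k \<notin> set ids" using H k by auto
  have st: "qstep E (Os,R,l,rv,cp) (InvDeq k) (Os,R,l,rv,cp(k\<mapsto>R1))"
    by (rule qstep.intros(2)) (use H k in auto)
  have "Fc E \<sigma> inn rv0 (cp0(k\<mapsto>R1)) Os R l rv (cp(k\<mapsto>R1)) ids"
    unfolding Fc_def
  proof (intro conjI)
    show "Os = {j. (cp0(k\<mapsto>R1)) j = Some A1} \<union> set ids" using H k by auto
    show "l = (\<lambda>j. if j \<in> Os then Some (the (inn j), if (cp0(k\<mapsto>R1)) j = Some A2 then COMP else PEND) else None)"
      using H k kids by (auto simp: fun_eq_iff)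
    show "cp(k\<mapsto>R1) = (\<lambda>j. if (cp0(k\<mapsto>R1)) j = Some A then Some A1 else (cp0(k\<mapsto>R1)) j)"
      using H k by (auto simp: fun_eq_iff)
  qed (use H k kids in auto)
  with st show ?thesis by blast
qed

lemma fwd_RetDeq:
  assumes F: "Fc E \<sigma> inn rv0 cp0 Os R l rv cp ids" and k: "cp0 k = Some R2" and d: "rv0 k = Some d"
  shows "Fc E \<sigma> inn rv0 (cp0(k\<mapsto>R3)) Os R l rv (cp(k\<mapsto>R3)) ids
    \<and> qstep E (Os,R,l,rv,cp) (RetDeq d k) (Os,R,l,rv,cp(k\<mapsto>R3))"
proof -
  note H = F[unfolded Fc_def]
  have kids: "k \<notin> set ids" using H k by auto
  have knn: "k \<notin> dom inn"
  proof
    assume "k \<in> dom inn" with H have "cp0 k = Some A1 \<or> cp0 k = Some A \<or> cp0 k = Some A2" by blast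
    with k show False by simp
  qed
  have st: "qstep E (Os,R,l,rv,cp) (RetDeq d k) (Os,R,l,rv,cp(k\<mapsto>R3))"
    by (rule qstep.intros(3)) (use H k d in auto)
  have "Fc E \<sigma> inn rv0 (cp0(k\<mapsto>R3)) Os R l rv (cp(k\<mapsto>R3)) ids"
    unfolding Fc_def
  proof (intro conjI)
    show "Os = {j. (cp0(k\<mapsto>R3)) j = Some A1} \<union> set ids" using H k by auto
    show "l = (\<lambda>j. if j \<in> Os then Some (the (inn j), if (cp0(k\<mapsto>R3)) j = Some A2 then COMP else PEND) else None)"
      using H k kids by (auto simp: fun_eq_iff)
    show "cp(k\<mapsto>R3) = (\<lambda>j. if (cp0(k\<mapsto>R3)) j = Some A then Some A1 else (cp0(k\<mapsto>R3)) j)"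
      using H k by (auto simp: fun_eq_iff)
  qed (use H k kids knn in auto)
  with st show ?thesis by blast
qed

lemma fwd_LinDeqE:
  assumes F: "Fc E [] inn rv0 cp0 Os R l rv cp ids" and k: "cp0 k = Some R1"
  shows "Fc E [] inn (rv0(k\<mapsto>E)) (cp0(k\<mapsto>R2)) Os R l (rv(k\<mapsto>E)) (cp(k\<mapsto>R2)) ids
    \<and> qstep E (Os,R,l,rv,cp) (LinDeq E k) (Os,R,l,rv(k\<mapsto>E),cp(k\<mapsto>R2))"
proof -
  note H = F[unfolded Fc_def]
  have kids: "k \<notin> set ids" using H k by auto
  have knn: "k \<notin> dom inn"
  proof
    assume "k \<in> dom inn" with H have "cp0 k = Some A1 \<or> cp0 k = Some A \<or> cp0 k = Some A2" by blast
    with k show False by simp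
  qed
  have st: "qstep E (Os,R,l,rv,cp) (LinDeq E k) (Os,R,l,rv(k\<mapsto>E),cp(k\<mapsto>R2))"
    by (rule qstep.intros(7)) (use H k in auto)
  have "Fc E [] inn (rv0(k\<mapsto>E)) (cp0(k\<mapsto>R2)) Os R l (rv(k\<mapsto>E)) (cp(k\<mapsto>R2)) ids"
    unfolding Fc_def
  proof (intro conjI)
    show "Os = {j. (cp0(k\<mapsto>R2)) j = Some A1} \<union> set ids" using H k by auto
    show "l = (\<lambda>j. if j \<in> Os then Some (the (inn j), if (cp0(k\<mapsto>R2)) j = Some A2 then COMP else PEND) else None)"
      using H k kids by (auto simp: fun_eq_iff)
    show "cp(k\<mapsto>R2) = (\<lambda>j. if (cp0(k\<mapsto>R2)) j = Some A then Some A1 else (cp0(k\<mapsto>R2)) j)"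
      using H k by (auto simp: fun_eq_iff)
  qed (use H k kids knn in auto)
  with st show ?thesis by blast
qed

lemma fwd_LinDeq:
  assumes F: "Fc E (\<sigma>'@[d]) inn rv0 cp0 Os R l rv cp ids" and k: "cp0 k = Some R1"
  shows "\<exists>k' ids0. Fc E \<sigma>' inn (rv0(k\<mapsto>d)) (cp0(k\<mapsto>R2)) (Os-{k'}) (remove_from R k') (l(k':=None)) (rv(k\<mapsto>d)) (cp(k\<mapsto>R2)) ids0
    \<and> qstep E (Os,R,l,rv,cp) (LinDeq d k) (Os-{k'}, remove_from R k', l(k':=None), rv(k\<mapsto>d), cp(k\<mapsto>R2))"
proof -
  note H = F[unfolded Fc_def]
  have kids: "k \<notin> set ids" using H k by auto
  have knn: "k \<notin> dom inn"
  proof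
    assume "k \<in> dom inn" with H have "cp0 k = Some A1 \<or> cp0 k = Some A \<or> cp0 k = Some A2" by blast
    with k show False by simp
  qed
  have "ids \<noteq> []" using H by auto
  then obtain ids0 k' where ids: "ids = ids0 @ [k']" by (metis rev_exhaust)
  have s': "\<sigma>' = map (\<lambda>j. the (inn j)) ids0" and dk: "d = the (inn k')" using H ids by auto
  have k'ids0: "k' \<notin> set ids0" using H ids by auto
  have k'cp: "cp0 k' = Some A \<or> cp0 k' = Some A2" using H ids by auto
  have k'Os: "k' \<in> Os" using H ids by auto
  have kk': "k \<noteq> k'" using k k'cp by auto
  have dE: "d \<noteq> E"
  proof -
    from k'cp H have "k' \<in> dom inn" by blast
    then obtain e where "inn k' = Some e" by auto
    with H dk show ?thesis by auto
  qed
  have min: "k' \<in> minset Os R"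
    unfolding minset_def
  proof (safe intro!: k'Os)
    fix j assume "j \<in> Os" "(j,k') \<in> R"
    with H have "j \<in> set ids" "j \<noteq> k'" by auto
    with ids have "j \<in> set ids0" by auto
    with H ids \<open>(j,k') \<in> R\<close> show False by (auto simp: sorted_wrt_append)
  qed
  have lk': "l k' = Some (d, if cp0 k' = Some A2 then COMP else PEND)" using H k'Os dk by auto
  have st: "qstep E (Os,R,l,rv,cp) (LinDeq d k) (Os-{k'}, remove_from R k', l(k':=None), rv(k\<mapsto>d), cp(k\<mapsto>R2))"
    proof (rule qstep.intros(6)[where st="if cp0 k' = Some A2 then COMP else PEND"])
    show "cp k = Some R1" using H k by auto
  qed (use dE min lk' in auto)
  have "Fc E \<sigma>' inn (rv0(k\<mapsto>d)) (cp0(k\<mapsto>R2)) (Os-{k'}) (remove_from R k') (l(k':=None)) (rv(k\<mapsto>d)) (cp(k\<mapsto>R2)) ids0"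
    unfolding Fc_def
  proof (intro conjI)
    show "distinct ids0" using H ids by auto
    show "\<sigma>' = map (\<lambda>j. the (inn j)) ids0" by fact
    show "Os - {k'} = {j. (cp0(k\<mapsto>R2)) j = Some A1} \<union> set ids0" using H k k'cp k'ids0 ids by auto
    show "l(k':=None) = (\<lambda>j. if j \<in> Os - {k'} then Some (the (inn j), if (cp0(k\<mapsto>R2)) j = Some A2 then COMP else PEND) else None)"
      using H k kids kk' by (auto simp: fun_eq_iff)
    show "cp(k\<mapsto>R2) = (\<lambda>j. if (cp0(k\<mapsto>R2)) j = Some A then Some A1 else (cp0(k\<mapsto>R2)) j)"
      using H k by (auto simp: fun_eq_iff)
    show "\<forall>a b. (a,b) \<in> remove_from R k' \<longrightarrow> a \<in> set ids0 \<and> b \<in> Os - {k'} \<and> a \<noteq> b"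
      using H ids by (auto simp: remove_from_def)
    show "sorted_wrt (\<lambda>x y. (x,y) \<notin> remove_from R k') ids0"
      using H ids by (auto simp: remove_from_def sorted_wrt_append elim: sorted_wrt_mono_rel[rotated])
  qed (use H k kids knn ids in auto)
  with st show ?thesis by blast
qed

lemma fwd_step:
  assumes F: "Fsim E t s" and st: "q0step E t a t'"
  shows "\<exists>s'. Fsim E t' s' \<and> ((\<exists>d k. a = LinEnq d k) \<and> s' = s \<or> qstep E s a s')"
  using st
proof (cases rule: q0step.cases)
  case (1 k cp d \<sigma> inn rv)
  from F[unfolded 1(1)] obtain Os R l rv' cp' ids where s: "s = (Os,R,l,rv',cp')" and H: "Fc E \<sigma> inn rv cp Os R l rv' cp' ids"
    by (rule FsimE)
  have "k \<notin> dom cp" "d \<noteq> E" using 1 by auto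
  from fwd_InvEnq[OF H this] show ?thesis unfolding s 1(2,3) by (blast intro: FsimI)
next
  case (2 cp k inn d \<sigma> rv)
  from F[unfolded 2(1)] obtain Os R l rv' cp' ids where s: "s = (Os,R,l,rv',cp')" and H: "Fc E \<sigma> inn rv cp Os R l rv' cp' ids"
    by (rule FsimE)
  from fwd_LinEnq[OF H 2(4,5)] have "Fsim E t' s" unfolding s 2(3) by (blast intro: FsimI)
  then show ?thesis using 2 by blast
next
  case (3 cp k \<sigma> inn rv)
  from F[unfolded 3(1)] obtain Os R l rv' cp' ids where s: "s = (Os,R,l,rv',cp')" and H: "Fc E \<sigma> inn rv cp Os R l rv' cp' ids"
    by (rule FsimE)
  show ?thesis
  proof (cases "k \<in> set ids")
    case True
    from fwd_RetEnq1[OF H 3(4) True] show ?thesis unfolding s 3(2,3) by (blast intro: FsimI)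
  next
    case False
    from fwd_RetEnq2[OF H 3(4) False] show ?thesis unfolding s 3(2,3) by (blast intro: FsimI)
  qed
next
  case (4 k cp \<sigma> inn rv)
  from F[unfolded 4(1)] obtain Os R l rv' cp' ids where s: "s = (Os,R,l,rv',cp')" and H: "Fc E \<sigma> inn rv cp Os R l rv' cp' ids"
    by (rule FsimE)
  from fwd_InvDeq[OF H 4(4)] show ?thesis unfolding s 4(2,3) by (blast intro: FsimI)
next
  case (5 cp k \<sigma>' d inn rv)
  from F[unfolded 5(1)] obtain Os R l rv' cp' ids where s: "s = (Os,R,l,rv',cp')" and H: "Fc E (\<sigma>'@[d]) inn rv cp Os R l rv' cp' ids"
    by (rule FsimE)
  from fwd_LinDeq[OF H 5(4)] show ?thesis unfolding s 5(2,3) by (blast intro: FsimI)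
next
  case (6 cp k inn rv)
  from F[unfolded 6(1)] obtain Os R l rv' cp' ids where s: "s = (Os,R,l,rv',cp')" and H: "Fc E [] inn rv cp Os R l rv' cp' ids"
    by (rule FsimE)
  from fwd_LinDeqE[OF H 6(4)] show ?thesis unfolding s 6(2,3) by (blast intro: FsimI)
next
  case (7 cp k rv d \<sigma> inn)
  from F[unfolded 7(1)] obtain Os R l rv' cp' ids where s: "s = (Os,R,l,rv',cp')" and H: "Fc E \<sigma> inn rv cp Os R l rv' cp' ids"
    by (rule FsimE)
  from fwd_RetDeq[OF H 7(4,5)] show ?thesis unfolding s 7(2,3) by (blast intro: FsimI)
qed

lemma fwd_execs:
  assumes "execs (AbsQ0 E) tr t"
  shows "\<exists>tr' s. execs (AbsQ E) tr' s \<and> Fsim E t s \<and> filter is_call_ret tr' = filter is_call_ret tr"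
  using assms
proof (induction rule: execs.induct)
  case execs_nil
  have "Fsim E (init (AbsQ0 E)) (init (AbsQ E))"
    unfolding AbsQ0_def AbsQ_def by (auto intro!: FsimI[where ids="[]"] simp: Fc_def fun_eq_iff)
  then show ?case by (intro exI[of _ "[]"] exI[of _ "init (AbsQ E)"]) (auto intro: execs.execs_nil)
next
  case (execs_snoc tr s a s')
  then obtain tr' q where q: "execs (AbsQ E) tr' q" "Fsim E s q" "filter is_call_ret tr' = filter is_call_ret tr" by blast
  from execs_snoc(2) have "q0step E s a s'" by (simp add: AbsQ0_def)
  from fwd_step[OF q(2) this] obtain q' where q': "Fsim E s' q'" "(\<exists>d k. a = LinEnq d k) \<and> q' = q \<or> qstep E q a q'" by blast
  from q'(2) show ?case
  proof
    assume H: "(\<exists>d k. a = LinEnq d k) \<and> q' = q"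
    then have "filter is_call_ret (tr @ [a]) = filter is_call_ret tr" by auto
    with H q q' show ?thesis by (intro exI[of _ tr'] exI[of _ q] conjI) auto
  next
    assume "qstep E q a q'"
    then have "execs (AbsQ E) (tr' @ [a]) q'" using q(1) by (auto intro: execs.execs_snoc simp: AbsQ_def)
    with q q' show ?thesis by (intro exI[of _ "tr' @ [a]"] exI[of _ q'] conjI) auto
  qed
qed

lemma refines_fwd: "refines (AbsQ0 E) (AbsQ E)"
  unfolding refines_def hist_def traces_def
proof
  fix h assume "h \<in> filter is_call_ret ` {tr. \<exists>s. execs (AbsQ0 E) tr s}"
  then obtain tr t where tr: "execs (AbsQ0 E) tr t" and h: "h = filter is_call_ret tr" by auto
  from fwd_execs[OF tr] obtain tr' s where "execs (AbsQ E) tr' s" "filter is_call_ret tr' = filter is_call_ret tr" by blast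
  then show "h \<in> filter is_call_ret ` {tr. \<exists>s. execs (AbsQ E) tr s}" unfolding h by (metis (mono_tags, lifting) image_eqI mem_Collect_eq)
qed



fun innupd :: "(nat \<rightharpoonup> 'v) \<Rightarrow> 'v act \<Rightarrow> (nat \<rightharpoonup> 'v)" where
  "innupd m (InvEnq d k) = m(k \<mapsto> d)"
| "innupd m _ = m"

definition innf :: "'v act list \<Rightarrow> (nat \<rightharpoonup> 'v)" where
  "innf tr = foldl innupd Map.empty tr"

lemma innf_nil[simp]: "innf [] = Map.empty" by (simp add: innf_def)
lemma innf_snoc[simp]: "innf (tr @ [a]) = innupd (innf tr) a" by (simp add: innf_def)

definition Invc :: "(nat \<rightharpoonup> 'v) \<Rightarrow> nat set \<Rightarrow> (nat \<times> nat) set \<Rightarrow> (nat \<rightharpoonup> 'v \<times> status) \<Rightarrow> (nat \<rightharpoonup> cpl) \<Rightarrow> bool" where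
"Invc inn Os R l cp \<longleftrightarrow>
  (\<forall>k\<in>Os. (\<exists>d. l k = Some (d,PEND) \<and> cp k = Some A1) \<or> (\<exists>d. l k = Some (d,COMP) \<and> cp k = Some A2)) \<and>
  (\<forall>a b. (a,b) \<in> R \<longrightarrow> a \<in> COMPs Os l) \<and>
  (\<forall>k. inn k \<noteq> None \<longrightarrow> cp k = Some A1 \<or> cp k = Some A2) \<and>
  (\<forall>k\<in>Os. inn k = Some (fst (the (l k)))) \<and>
  (\<exists>L. distinct L \<and> set L = COMPs Os l \<and> sorted_wrt (\<lambda>x y. (x,y) \<notin> R) L)"

definition Inv :: "'v act list \<Rightarrow> 'v qstate \<Rightarrow> bool" where
"Inv tr s \<longleftrightarrow> (\<forall>Os R l rv cp. s = (Os,R,l,rv,cp) \<longrightarrow> Invc (innf tr) Os R l cp)"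

lemma Inv_simp[simp]: "Inv tr (Os,R,l,rv,cp) = Invc (innf tr) Os R l cp" by (simp add: Inv_def)

lemma inv_step:
  assumes I: "Inv tr s" and st: "qstep E s a s'"
  shows "Inv (tr @ [a]) s'"
  using st
proof (cases rule: qstep.cases)
  case (1 k cp d Os R l rv)
  note H = I[unfolded 1(1), simplified, unfolded Invc_def]
  have kOs: "k \<notin> Os" using H 1 by fastforce
  have CO: "COMPs (Os \<union> {k}) (l(k \<mapsto> (d, PEND))) = COMPs Os l" using kOs by (auto simp: COMPs_def)
  from H obtain L where L: "distinct L" "set L = COMPs Os l" "sorted_wrt (\<lambda>x y. (x,y) \<notin> R) L" by blast
  have kL: "k \<notin> set L" using L kOs by (auto simp: COMPs_def)
  have "Invc ((innf tr)(k\<mapsto>d)) (Os \<union> {k}) (R \<union> COMPs Os l \<times> {k}) (l(k \<mapsto> (d, PEND))) (cp(k \<mapsto> A1))"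
    unfolding Invc_def CO
  proof (intro conjI)
    show "\<exists>L. distinct L \<and> set L = COMPs Os l \<and> sorted_wrt (\<lambda>x y. (x,y) \<notin> R \<union> COMPs Os l \<times> {k}) L"
      using L kL by (auto intro!: exI[of _ L] elim!: sorted_wrt_mono_rel[rotated])
    show "\<forall>a b. (a, b) \<in> R \<union> COMPs Os l \<times> {k} \<longrightarrow> a \<in> COMPs Os l" using H by auto
  qed (use H kOs in auto)
  then show ?thesis using 1 by simp
next
  case (2 k cp Os R l rv)
  note H = I[unfolded 2(1), simplified, unfolded Invc_def]
  have kOs: "k \<notin> Os" using H 2 by fastforce
  have "Invc (innf tr) Os R l (cp(k \<mapsto> R1))"
    unfolding Invc_def using H kOs 2 by auto
  then show ?thesis using 2 by simp
next
  case (3 cp k rv d Os R l)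
  note H = I[unfolded 3(1), simplified, unfolded Invc_def]
  have kOs: "k \<notin> Os" using H 3 by fastforce
  have "Invc (innf tr) Os R l (cp(k \<mapsto> R3))"
    unfolding Invc_def using H kOs 3 by auto
  then show ?thesis using 3 by simp
next
  case (4 cp k Os l d R rv)
  note H = I[unfolded 4(1), simplified, unfolded Invc_def]
  from H obtain L where L: "distinct L" "set L = COMPs Os l" "sorted_wrt (\<lambda>x y. (x,y) \<notin> R) L" by blast
  have kC: "k \<notin> COMPs Os l" using 4 by (auto simp: COMPs_def)
  have CO: "COMPs Os (l(k \<mapsto> (d, COMP))) = insert k (COMPs Os l)" using 4 by (auto simp: COMPs_def)
  have "Invc (innf tr) Os R (l(k \<mapsto> (d, COMP))) (cp(k \<mapsto> A2))"
    unfolding Invc_def CO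
  proof (intro conjI)
    show "\<exists>L. distinct L \<and> set L = insert k (COMPs Os l) \<and> sorted_wrt (\<lambda>x y. (x,y) \<notin> R) L"
      using L kC H by (intro exI[of _ "k#L"]) auto
  qed (use H 4 in auto)
  then show ?thesis using 4 by simp
next
  case (5 cp k Os R l rv)
  note H = I[unfolded 5(1), simplified, unfolded Invc_def]
  have "Invc (innf tr) Os R l (cp(k \<mapsto> A2))"
    unfolding Invc_def using H 5 by auto
  then show ?thesis using 5 by simp
next
  case (6 cp k d k' Os R l st rv)
  note H = I[unfolded 6(1), simplified, unfolded Invc_def]
  have kOs: "k \<notin> Os" using H 6 by fastforce
  from H obtain L where L: "distinct L" "set L = COMPs Os l" "sorted_wrt (\<lambda>x y. (x,y) \<notin> R) L" by blast
  have CO: "COMPs (Os - {k'}) (l(k' := None)) = COMPs Os l - {k'}" by (auto simp: COMPs_def)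
  have "Invc (innf tr) (Os - {k'}) (remove_from R k') (l(k' := None)) (cp(k \<mapsto> R2))"
    unfolding Invc_def CO
  proof (intro conjI)
    show "\<exists>L. distinct L \<and> set L = COMPs Os l - {k'} \<and> sorted_wrt (\<lambda>x y. (x,y) \<notin> remove_from R k') L"
    proof (intro exI[of _ "filter (\<lambda>x. x \<noteq> k') L"] conjI)
      have "sorted_wrt (\<lambda>x y. (x,y) \<notin> R) (filter (\<lambda>x. x \<noteq> k') L)" using L(3) by (rule sorted_wrt_filter)
      then show "sorted_wrt (\<lambda>x y. (x,y) \<notin> remove_from R k') (filter (\<lambda>x. x \<noteq> k') L)"
        by (rule sorted_wrt_mono_rel[rotated]) (auto simp: remove_from_def)
    qed (use L in auto)
    show "\<forall>a b. (a, b) \<in> remove_from R k' \<longrightarrow> a \<in> COMPs Os l - {k'}"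
      using H by (auto simp: remove_from_def)
  qed (use H kOs 6 in auto)
  then show ?thesis using 6 by simp
next
  case (7 cp k Os l R rv)
  note H = I[unfolded 7(1), simplified, unfolded Invc_def]
  have kOs: "k \<notin> Os" using H 7 by fastforce
  have "Invc (innf tr) Os R l (cp(k \<mapsto> R2))"
    unfolding Invc_def using H kOs 7 by auto
  then show ?thesis using 7 by simp
qed

definition cpf :: "nat set \<Rightarrow> (nat \<rightharpoonup> cpl) \<Rightarrow> nat list \<Rightarrow> (nat \<rightharpoonup> cpl)" where
  "cpf Os cp ids = (\<lambda>k. if cp k = Some A1 then (if k \<in> Os \<and> k \<notin> set ids then Some A1 else Some A) else cp k)"

definition vl :: "(nat \<rightharpoonup> 'v \<times> status) \<Rightarrow> nat \<Rightarrow> 'v" where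
  "vl l = (\<lambda>k. fst (the (l k)))"

definition goodc :: "nat set \<Rightarrow> (nat \<times> nat) set \<Rightarrow> (nat \<rightharpoonup> 'v \<times> status) \<Rightarrow> nat list \<Rightarrow> bool" where
  "goodc Os R l ids \<longleftrightarrow> distinct ids \<and> set ids \<subseteq> Os \<and> COMPs Os l \<subseteq> set ids \<and> sorted_wrt (\<lambda>x y. (x,y) \<notin> R) ids"

inductive q0path :: "'v \<Rightarrow> 'v q0state \<Rightarrow> 'v act list \<Rightarrow> 'v q0state \<Rightarrow> bool" for E where
  q0p_nil: "q0path E t [] t"
| q0p_cons: "q0step E t a t' \<Longrightarrow> q0path E t' ws t'' \<Longrightarrow> q0path E t (a # ws) t''"

lemma q0path_append: "q0path E t ws t' \<Longrightarrow> q0path E t' vs t'' \<Longrightarrow> q0path E t (ws @ vs) t''"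
  by (induction rule: q0path.induct) (auto intro: q0path.intros)

lemma q0path_one: "q0step E t a t' \<Longrightarrow> q0path E t [a] t'"
  by (auto intro: q0path.intros)

lemma q0path_execs: "q0path E t ws t' \<Longrightarrow> execs (AbsQ0 E) tr t \<Longrightarrow> execs (AbsQ0 E) (tr @ ws) t'"
proof (induction arbitrary: tr rule: q0path.induct)
  case (q0p_nil t) then show ?case by simp
next
  case (q0p_cons t a t' ws t'')
  have "execs (AbsQ0 E) (tr @ [a]) t'" using q0p_cons by (auto intro: execs.execs_snoc simp: AbsQ0_def)
  from q0p_cons.IH[OF this] show ?case by simp
qed

lemma lin_seq:
  assumes "distinct ps" "\<forall>j\<in>set ps. cp0 j = Some A1 \<and> inn j = Some (val j)"
  shows "\<exists>ws. q0path E (\<sigma>, inn, rv, cp0) ws (map val ps @ \<sigma>, inn, rv, \<lambda>j. if j \<in> set ps then Some A else cp0 j)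
            \<and> filter is_call_ret ws = []"
  using assms
proof (induction ps)
  case Nil
  have "(\<lambda>j. if j \<in> set [] then Some A else cp0 j) = cp0" by auto
  then show ?case by (auto intro: q0path.intros)
next
  case (Cons p ps)
  then obtain ws where ws: "q0path E (\<sigma>, inn, rv, cp0) ws (map val ps @ \<sigma>, inn, rv, \<lambda>j. if j \<in> set ps then Some A else cp0 j)"
    "filter is_call_ret ws = []" by auto
  have "q0step E (map val ps @ \<sigma>, inn, rv, \<lambda>j. if j \<in> set ps then Some A else cp0 j) (LinEnq (val p) p)
     (val p # (map val ps @ \<sigma>), inn, rv, (\<lambda>j. if j \<in> set ps then Some A else cp0 j)(p \<mapsto> A))"
    by (rule q0step.intros(2)) (use Cons.prems in auto)
  moreover have "(\<lambda>j. if j \<in> set ps then Some A else cp0 j)(p \<mapsto> A) = (\<lambda>j. if j \<in> set (p#ps) then Some A else cp0 j)"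
    by (auto simp: fun_eq_iff)
  ultimately have "q0step E (map val ps @ \<sigma>, inn, rv, \<lambda>j. if j \<in> set ps then Some A else cp0 j) (LinEnq (val p) p)
     (map val (p#ps) @ \<sigma>, inn, rv, \<lambda>j. if j \<in> set (p#ps) then Some A else cp0 j)" by simp
  from q0path_append[OF ws(1) q0path_one[OF this]] ws(2) show ?case by (intro exI) auto
qed

lemma bwd_InvEnq:
  assumes I: "Invc inn Os R l cp" and k: "k \<notin> dom cp" and d: "d \<noteq> E"
  and G: "goodc (Os \<union> {k}) (R \<union> COMPs Os l \<times> {k}) (l(k\<mapsto>(d,PEND))) ids'"
  shows "\<exists>ids ws. goodc Os R l ids \<and> q0path E (map (vl l) ids, inn, rv, cpf Os cp ids) ws
     (map (vl (l(k\<mapsto>(d,PEND)))) ids', inn(k\<mapsto>d), rv, cpf (Os\<union>{k}) (cp(k\<mapsto>A1)) ids')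
     \<and> filter is_call_ret ws = [InvEnq d k]"
proof -
  note H = I[unfolded Invc_def]
  note G' = G[unfolded goodc_def]
  have kOs: "k \<notin> Os" using H k by fastforce
  have COs: "COMPs Os l \<subseteq> COMPs (Os \<union> {k}) (l(k\<mapsto>(d,PEND)))" using kOs by (auto simp: COMPs_def)
  show ?thesis
  proof (cases "k \<in> set ids'")
    case False
    have g: "goodc Os R l ids'" unfolding goodc_def
    proof (intro conjI)
      show "sorted_wrt (\<lambda>x y. (x, y) \<notin> R) ids'" using G' by (auto elim!: sorted_wrt_mono_rel[rotated])
    qed (use G' False COs in auto)
    have cpk: "cpf Os cp ids' k = None" using k by (auto simp: cpf_def)
    have st: "q0step E (map (vl l) ids', inn, rv, cpf Os cp ids') (InvEnq d k)
       (map (vl l) ids', inn(k\<mapsto>d), rv, (cpf Os cp ids')(k\<mapsto>A1))"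
      by (rule q0step.intros(1)) (use cpk d in auto)
    have e1: "map (vl (l(k\<mapsto>(d,PEND)))) ids' = map (vl l) ids'" using False by (auto simp: vl_def)
    have e2: "(cpf Os cp ids')(k\<mapsto>A1) = cpf (Os\<union>{k}) (cp(k\<mapsto>A1)) ids'"
      using False kOs by (auto simp: cpf_def fun_eq_iff)
    show ?thesis using g q0path_one[OF st] unfolding e1 e2 by (intro exI[of _ ids'] exI[of _ "[InvEnq d k]"]) auto
  next
    case True
    then obtain pre post where ids': "ids' = pre @ k # post" by (meson split_list)
    have dist: "distinct (pre @ k # post)" using G' ids' by simp
    have pre: "\<forall>j\<in>set pre. j \<in> Os \<and> cp j = Some A1 \<and> inn j = Some (vl l j)"
    proof
      fix j assume j: "j \<in> set pre"
      have jk: "j \<noteq> k" using dist j by auto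
      have jOs: "j \<in> Os" using G' ids' j jk by auto
      have "(j,k) \<notin> R \<union> COMPs Os l \<times> {k}" using G' ids' j by (auto simp: sorted_wrt_append)
      then have "j \<notin> COMPs Os l" by auto
      with H jOs have "\<exists>e. l j = Some (e,PEND) \<and> cp j = Some A1" by (auto simp: COMPs_def)
      with H jOs show "j \<in> Os \<and> cp j = Some A1 \<and> inn j = Some (vl l j)" by (auto simp: vl_def)
    qed
    have kpost: "k \<notin> set post" "k \<notin> set pre" using dist by auto
    have g: "goodc Os R l post" unfolding goodc_def
    proof (intro conjI)
      show "sorted_wrt (\<lambda>x y. (x, y) \<notin> R) post" using G' ids'
        by (auto simp: sorted_wrt_append elim!: sorted_wrt_mono_rel[rotated])
      show "distinct post" using dist by simp
      show "set post \<subseteq> Os" using G' ids' kpost by auto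
      show "COMPs Os l \<subseteq> set post"
      proof
        fix c assume c: "c \<in> COMPs Os l"
        then have "c \<in> set ids'" using G' COs by auto
        moreover have "c \<noteq> k" using c kOs by (auto simp: COMPs_def)
        moreover have "c \<notin> set pre" using pre c H by (auto simp: COMPs_def)
        ultimately show "c \<in> set post" using ids' by auto
      qed
    qed
    have cpk: "cpf Os cp post k = None" using k by (auto simp: cpf_def)
    have st: "q0step E (map (vl l) post, inn, rv, cpf Os cp post) (InvEnq d k)
       (map (vl l) post, inn(k\<mapsto>d), rv, (cpf Os cp post)(k\<mapsto>A1))"
      by (rule q0step.intros(1)) (use cpk d in auto)
    let ?val = "vl (l(k\<mapsto>(d,PEND)))"
    have "\<exists>ws. q0path E (map (vl l) post, inn(k\<mapsto>d), rv, (cpf Os cp post)(k\<mapsto>A1)) ws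
       (map ?val (pre@[k]) @ map (vl l) post, inn(k\<mapsto>d), rv, \<lambda>j. if j \<in> set (pre@[k]) then Some A else ((cpf Os cp post)(k\<mapsto>A1)) j)
       \<and> filter is_call_ret ws = []"
    proof (rule lin_seq)
      show "distinct (pre @ [k])" using dist by simp
      show "\<forall>j\<in>set (pre @ [k]). ((cpf Os cp post)(k \<mapsto> A1)) j = Some A1 \<and> (inn(k \<mapsto> d)) j = Some (?val j)"
        using pre dist kpost by (auto simp: cpf_def vl_def)
    qed
    then obtain ws where ws: "q0path E (map (vl l) post, inn(k\<mapsto>d), rv, (cpf Os cp post)(k\<mapsto>A1)) ws
       (map ?val (pre@[k]) @ map (vl l) post, inn(k\<mapsto>d), rv, \<lambda>j. if j \<in> set (pre@[k]) then Some A else ((cpf Os cp post)(k\<mapsto>A1)) j)"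
       "filter is_call_ret ws = []" by blast
    have e1: "map ?val (pre@[k]) @ map (vl l) post = map ?val ids'" using ids' kpost by (auto simp: vl_def)
    have e2: "(\<lambda>j. if j \<in> set (pre@[k]) then Some A else ((cpf Os cp post)(k\<mapsto>A1)) j) = cpf (Os\<union>{k}) (cp(k\<mapsto>A1)) ids'"
      using pre dist ids' by (auto simp: cpf_def fun_eq_iff)
    have "q0path E (map (vl l) post, inn, rv, cpf Os cp post) (InvEnq d k # ws) (map ?val ids', inn(k\<mapsto>d), rv, cpf (Os\<union>{k}) (cp(k\<mapsto>A1)) ids')"
      using q0path.q0p_cons[OF st ws(1)] unfolding e1 e2 .
    then show ?thesis using g ws(2) by (intro exI[of _ post] exI[of _ "InvEnq d k # ws"]) auto
  qed
qed

lemma bwd_InvDeq: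
  assumes I: "Invc inn Os R l cp" and k: "k \<notin> dom cp" and G: "goodc Os R l ids"
  shows "\<exists>ids0 ws. goodc Os R l ids0 \<and> q0path E (map (vl l) ids0, inn, rv, cpf Os cp ids0) ws
     (map (vl l) ids, inn, rv, cpf Os (cp(k\<mapsto>R1)) ids) \<and> filter is_call_ret ws = [InvDeq k]"
proof -
  have st: "q0step E (map (vl l) ids, inn, rv, cpf Os cp ids) (InvDeq k) (map (vl l) ids, inn, rv, (cpf Os cp ids)(k\<mapsto>R1))"
    by (rule q0step.intros(4)) (use k in \<open>auto simp: cpf_def\<close>)
  have e: "(cpf Os cp ids)(k\<mapsto>R1) = cpf Os (cp(k\<mapsto>R1)) ids" by (auto simp: cpf_def fun_eq_iff)
  show ?thesis using G q0path_one[OF st] unfolding e by (intro exI[of _ ids] exI[of _ "[InvDeq k]"]) auto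
qed

lemma bwd_RetDeq:
  assumes k: "cp k = Some R2" "rv k = Some d" and G: "goodc Os R l ids"
  shows "\<exists>ids0 ws. goodc Os R l ids0 \<and> q0path E (map (vl l) ids0, inn, rv, cpf Os cp ids0) ws
     (map (vl l) ids, inn, rv, cpf Os (cp(k\<mapsto>R3)) ids) \<and> filter is_call_ret ws = [RetDeq d k]"
proof -
  have st: "q0step E (map (vl l) ids, inn, rv, cpf Os cp ids) (RetDeq d k) (map (vl l) ids, inn, rv, (cpf Os cp ids)(k\<mapsto>R3))"
    by (rule q0step.intros(7)) (use k in \<open>auto simp: cpf_def\<close>)
  have e: "(cpf Os cp ids)(k\<mapsto>R3) = cpf Os (cp(k\<mapsto>R3)) ids" by (auto simp: cpf_def fun_eq_iff)
  show ?thesis using G q0path_one[OF st] unfolding e by (intro exI[of _ ids] exI[of _ "[RetDeq d k]"]) auto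
qed

lemma bwd_RetEnq1:
  assumes k: "cp k = Some A1" "k \<in> Os" "l k = Some (d, PEND)" and G: "goodc Os R (l(k\<mapsto>(d,COMP))) ids"
  shows "\<exists>ids0 ws. goodc Os R l ids0 \<and> q0path E (map (vl l) ids0, inn, rv, cpf Os cp ids0) ws
     (map (vl (l(k\<mapsto>(d,COMP)))) ids, inn, rv, cpf Os (cp(k\<mapsto>A2)) ids) \<and> filter is_call_ret ws = [RetEnq k]"
proof -
  note G' = G[unfolded goodc_def]
  have kids: "k \<in> set ids" using G' k by (auto simp: COMPs_def)
  have g: "goodc Os R l ids" using G' k unfolding goodc_def by (auto simp: COMPs_def)
  have st: "q0step E (map (vl l) ids, inn, rv, cpf Os cp ids) (RetEnq k) (map (vl l) ids, inn, rv, (cpf Os cp ids)(k\<mapsto>A2))"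
    by (rule q0step.intros(3)) (use k kids in \<open>auto simp: cpf_def\<close>)
  have e: "(cpf Os cp ids)(k\<mapsto>A2) = cpf Os (cp(k\<mapsto>A2)) ids" by (auto simp: cpf_def fun_eq_iff)
  have e2: "map (vl (l(k\<mapsto>(d,COMP)))) ids = map (vl l) ids" using k by (auto simp: vl_def)
  show ?thesis using g q0path_one[OF st] unfolding e e2 by (intro exI[of _ ids] exI[of _ "[RetEnq k]"]) auto
qed

lemma bwd_RetEnq2:
  assumes k: "cp k = Some A1" "k \<notin> Os" and G: "goodc Os R l ids"
  shows "\<exists>ids0 ws. goodc Os R l ids0 \<and> q0path E (map (vl l) ids0, inn, rv, cpf Os cp ids0) ws
     (map (vl l) ids, inn, rv, cpf Os (cp(k\<mapsto>A2)) ids) \<and> filter is_call_ret ws = [RetEnq k]"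
proof -
  have st: "q0step E (map (vl l) ids, inn, rv, cpf Os cp ids) (RetEnq k) (map (vl l) ids, inn, rv, (cpf Os cp ids)(k\<mapsto>A2))"
    by (rule q0step.intros(3)) (use k in \<open>auto simp: cpf_def\<close>)
  have e: "(cpf Os cp ids)(k\<mapsto>A2) = cpf Os (cp(k\<mapsto>A2)) ids" by (auto simp: cpf_def fun_eq_iff)
  show ?thesis using G q0path_one[OF st] unfolding e by (intro exI[of _ ids] exI[of _ "[RetEnq k]"]) auto
qed

lemma bwd_LinDeq:
  assumes I: "Invc inn Os R l cp" and k: "cp k = Some R1" "k' \<in> minset Os R" "l k' = Some (d, st)"
    and G: "goodc (Os - {k'}) (remove_from R k') (l(k' := None)) ids"
  shows "\<exists>ids0 ws. goodc Os R l ids0 \<and> q0path E (map (vl l) ids0, inn, rv, cpf Os cp ids0) ws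
     (map (vl (l(k' := None))) ids, inn, rv(k\<mapsto>d), cpf (Os - {k'}) (cp(k\<mapsto>R2)) ids) \<and> filter is_call_ret ws = []"
proof -
  note H = I[unfolded Invc_def]
  note G' = G[unfolded goodc_def]
  have k'Os: "k' \<in> Os" using k by (auto simp: minset_def)
  have kk': "k \<noteq> k'" using H k k'Os by fastforce
  have k'ids: "k' \<notin> set ids" using G' by auto
  have g: "goodc Os R l (ids @ [k'])" unfolding goodc_def
  proof (intro conjI)
    show "distinct (ids @ [k'])" using G' k'ids by simp
    show "set (ids @ [k']) \<subseteq> Os" using G' k'Os by auto
    show "COMPs Os l \<subseteq> set (ids @ [k'])" using G' by (auto simp: COMPs_def)
    have "sorted_wrt (\<lambda>x y. (x, y) \<notin> R) ids"
      using G' by (auto simp: remove_from_def elim!: sorted_wrt_mono_rel[rotated])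
    moreover have "\<forall>x\<in>set ids. (x,k') \<notin> R" using G' k by (auto simp: minset_def)
    ultimately show "sorted_wrt (\<lambda>x y. (x, y) \<notin> R) (ids @ [k'])" by (auto simp: sorted_wrt_append)
  qed
  have e0: "map (vl l) (ids @ [k']) = map (vl l) ids @ [d]" using k by (auto simp: vl_def)
  have st: "q0step E (map (vl l) ids @ [d], inn, rv, cpf Os cp (ids @ [k'])) (LinDeq d k)
     (map (vl l) ids, inn, rv(k\<mapsto>d), (cpf Os cp (ids @ [k']))(k\<mapsto>R2))"
    by (rule q0step.intros(5)) (use k in \<open>auto simp: cpf_def\<close>)
  have e: "(cpf Os cp (ids @ [k']))(k\<mapsto>R2) = cpf (Os - {k'}) (cp(k\<mapsto>R2)) ids" using kk' by (auto simp: cpf_def fun_eq_iff)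
  have e2: "map (vl (l(k' := None))) ids = map (vl l) ids" using k'ids by (auto simp: vl_def)
  show ?thesis using g q0path_one[OF st[folded e0]] unfolding e e2 by (intro exI[of _ "ids @ [k']"] exI[of _ "[LinDeq d k]"]) auto
qed

lemma bwd_LinDeqE:
  assumes I: "Invc inn Os R l cp" and k: "cp k = Some R1" "\<forall>o'\<in>Os. \<exists>d. l o' = Some (d, PEND)"
    and G: "goodc Os R l ids"
  shows "\<exists>ids0 ws. goodc Os R l ids0 \<and> q0path E (map (vl l) ids0, inn, rv, cpf Os cp ids0) ws
     (map (vl l) ids, inn, rv(k\<mapsto>E), cpf Os (cp(k\<mapsto>R2)) ids) \<and> filter is_call_ret ws = []"
proof -
  note H = I[unfolded Invc_def]
  note G' = G[unfolded goodc_def]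
  have g: "goodc Os R l []" using k unfolding goodc_def by (fastforce simp: COMPs_def)
  have st: "q0step E ([], inn, rv, cpf Os cp []) (LinDeq E k) ([], inn, rv(k\<mapsto>E), (cpf Os cp [])(k\<mapsto>R2))"
    by (rule q0step.intros(6)) (use k in \<open>auto simp: cpf_def\<close>)
  have ids: "\<forall>j\<in>set ids. j \<in> Os \<and> cp j = Some A1 \<and> inn j = Some (vl l j) \<and> j \<noteq> k"
  proof
    fix j assume j: "j \<in> set ids"
    then have jOs: "j \<in> Os" using G' by auto
    then obtain e where "l j = Some (e,PEND)" using k by auto
    with H jOs have "cp j = Some A1" by fastforce
    with H jOs k show "j \<in> Os \<and> cp j = Some A1 \<and> inn j = Some (vl l j) \<and> j \<noteq> k" by (auto simp: vl_def)
  qed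
  have "\<exists>ws. q0path E ([], inn, rv(k\<mapsto>E), (cpf Os cp [])(k\<mapsto>R2)) ws
       (map (vl l) ids @ [], inn, rv(k\<mapsto>E), \<lambda>j. if j \<in> set ids then Some A else ((cpf Os cp [])(k\<mapsto>R2)) j)
       \<and> filter is_call_ret ws = []"
    by (rule lin_seq) (use G' ids in \<open>auto simp: cpf_def\<close>)
  then obtain ws where ws: "q0path E ([], inn, rv(k\<mapsto>E), (cpf Os cp [])(k\<mapsto>R2)) ws
       (map (vl l) ids @ [], inn, rv(k\<mapsto>E), \<lambda>j. if j \<in> set ids then Some A else ((cpf Os cp [])(k\<mapsto>R2)) j)"
       "filter is_call_ret ws = []" by blast
  have e: "(\<lambda>j. if j \<in> set ids then Some A else ((cpf Os cp [])(k\<mapsto>R2)) j) = cpf Os (cp(k\<mapsto>R2)) ids"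
    using ids by (auto simp: cpf_def fun_eq_iff)
  have "q0path E ([], inn, rv, cpf Os cp []) (LinDeq E k # ws) (map (vl l) ids, inn, rv(k\<mapsto>E), cpf Os (cp(k\<mapsto>R2)) ids)"
    using q0path.q0p_cons[OF st ws(1)] unfolding e by simp
  then show ?thesis using g ws(2) by (intro exI[of _ "[]"] exI[of _ "LinDeq E k # ws"]) auto
qed

fun tst :: "'v qstate \<Rightarrow> nat list \<Rightarrow> (nat \<rightharpoonup> 'v) \<Rightarrow> 'v q0state" where
  "tst (Os,R,l,rv,cp) ids inn = (map (vl l) ids, inn, rv, cpf Os cp ids)"

fun good :: "'v qstate \<Rightarrow> nat list \<Rightarrow> bool" where
  "good (Os,R,l,rv,cp) ids = goodc Os R l ids"

lemma bwd_step:
  assumes I: "Inv tr s" and st: "qstep E s a s'" and G: "good s' ids'"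
  shows "\<exists>ids ws. good s ids \<and> q0path E (tst s ids (innf tr)) ws (tst s' ids' (innf (tr@[a])))
     \<and> filter is_call_ret ws = filter is_call_ret [a]"
  using st
proof (cases rule: qstep.cases)
  case (1 k cp d Os R l rv)
  from bwd_InvEnq[of "innf tr" Os R l cp k d E ids' rv] I G 1 show ?thesis by auto
next
  case (2 k cp Os R l rv)
  from bwd_InvDeq[of "innf tr" Os R l cp k ids' E rv] I G 2 show ?thesis by auto
next
  case (3 cp k rv d Os R l)
  from bwd_RetDeq[of cp k rv d Os R l ids' E "innf tr"] I G 3 show ?thesis by auto
next
  case (4 cp k Os l d R rv)
  from bwd_RetEnq1[of cp k Os l d R ids' E "innf tr" rv] I G 4 show ?thesis by auto
next
  case (5 cp k Os R l rv)
  from bwd_RetEnq2[of cp k Os R l ids' E "innf tr" rv] I G 5 show ?thesis by auto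
next
  case (6 cp k d k' Os R l st rv)
  from bwd_LinDeq[of "innf tr" Os R l cp k k' d st ids' E rv] I G 6 show ?thesis by auto
next
  case (7 cp k Os l R rv)
  from bwd_LinDeqE[of "innf tr" Os R l cp k ids' E rv] I G 7 show ?thesis by auto
qed

lemma bwd_execs:
  assumes "execs (AbsQ E) tr s"
  shows "Inv tr s \<and> (\<forall>ids. good s ids \<longrightarrow> (\<exists>tr0. execs (AbsQ0 E) tr0 (tst s ids (innf tr)) \<and> filter is_call_ret tr0 = filter is_call_ret tr))"
  using assms
proof (induction rule: execs.induct)
  case execs_nil
  have "Inv [] (init (AbsQ E))" by (simp add: AbsQ_def Invc_def COMPs_def)
  moreover have "execs (AbsQ0 E) [] (tst (init (AbsQ E)) ids (innf []))" if "good (init (AbsQ E)) ids" for ids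
  proof -
    have "ids = []" using that by (simp add: AbsQ_def goodc_def)
    then have "tst (init (AbsQ E)) ids (innf []) = init (AbsQ0 E)"
      by (simp add: AbsQ_def AbsQ0_def cpf_def fun_eq_iff)
    then show ?thesis by (simp add: execs.execs_nil)
  qed
  ultimately show ?case by blast
next
  case (execs_snoc tr s a s')
  have st: "qstep E s a s'" using execs_snoc(2) by (simp add: AbsQ_def)
  have I: "Inv tr s" using execs_snoc.IH by blast
  have "Inv (tr @ [a]) s'" by (rule inv_step[OF I st])
  moreover have "\<exists>tr0. execs (AbsQ0 E) tr0 (tst s' ids' (innf (tr @ [a]))) \<and> filter is_call_ret tr0 = filter is_call_ret (tr @ [a])"
    if G: "good s' ids'" for ids'
  proof -
    from bwd_step[OF I st G] obtain ids ws where w: "good s ids"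
      "q0path E (tst s ids (innf tr)) ws (tst s' ids' (innf (tr@[a])))" "filter is_call_ret ws = filter is_call_ret [a]" by blast
    from execs_snoc.IH w(1) obtain tr0 where tr0: "execs (AbsQ0 E) tr0 (tst s ids (innf tr))" "filter is_call_ret tr0 = filter is_call_ret tr" by blast
    from q0path_execs[OF w(2) tr0(1)] have "execs (AbsQ0 E) (tr0 @ ws) (tst s' ids' (innf (tr @ [a])))" .
    moreover have "filter is_call_ret (tr0 @ ws) = filter is_call_ret (tr @ [a])" using tr0(2) w(3) by simp
    ultimately show ?thesis by blast
  qed
  ultimately show ?case by blast
qed

lemma refines_bwd: "refines (AbsQ E) (AbsQ0 E)"
  unfolding refines_def hist_def traces_def
proof
  fix h assume "h \<in> filter is_call_ret ` {tr. \<exists>s. execs (AbsQ E) tr s}"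
  then obtain tr s where tr: "execs (AbsQ E) tr s" and h: "h = filter is_call_ret tr" by auto
  obtain Os R l rv cp where s: "s = (Os,R,l,rv,cp)" by (cases s) auto
  from bwd_execs[OF tr] have I: "Inv tr s" and B: "\<forall>ids. good s ids \<longrightarrow> (\<exists>tr0. execs (AbsQ0 E) tr0 (tst s ids (innf tr)) \<and> filter is_call_ret tr0 = filter is_call_ret tr)" by auto
  from I s obtain L where L: "distinct L" "set L = COMPs Os l" "sorted_wrt (\<lambda>x y. (x,y) \<notin> R) L"
    by (auto simp: Invc_def)
  have "good s L" using L s by (auto simp: goodc_def COMPs_def)
  with B obtain tr0 where "execs (AbsQ0 E) tr0 (tst s L (innf tr))" "filter is_call_ret tr0 = filter is_call_ret tr" by blast
  then show "h \<in> filter is_call_ret ` {tr. \<exists>s. execs (AbsQ0 E) tr s}" unfolding h by (metis (mono_tags, lifting) image_eqI mem_Collect_eq)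
qed


theorem theorem3:
  fixes EMPTY :: 'v
  shows "refines (AbsQ EMPTY) (AbsQ0 EMPTY) \<and> refines (AbsQ0 EMPTY) (AbsQ EMPTY)"
  by (intro conjI refines_bwd refines_fwd)

end
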